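(* Let $\mathcal{A}$ be a finite totally ordered alphabet and let $\mathbf{Ch}(\mathcal{A})$ be the Chinese monoid over $\mathcal{A}$. Then $\mathbf{Ch}(\mathcal{A})$ is of type 1: for every function $\sigma:\mathcal{A}\to\mathbb{N}_{\geq 2}$, the map $\phi_\sigma=\theta\times\operatorname{ev}_\sigma:\mathbf{Ch}(\mathcal{A},\sigma)\to \mathbf{Ch}(\mathcal{A},2)\times\mathbf{Com}(\mathcal{A},\sigma)$ is injective.
   Context: The Chinese monoid $\mathbf{Ch}(\mathcal{A})$ is the quotient of the free monoid $\mathcal{A}^*$ by the relations $cba=cab=bca$ for $a<b<c$, and $aba=baa$, $bba=bab$ for $a<b$ ($a,b,c\in\mathcal{A}$). For $\sigma:\mathcal{A}\to\mathbb{N}_{\geq2}$, $\mathbf{Ch}(\mathcal{A},\sigma)$ is the quotient of $\mathbf{Ch}(\mathcal{A})$ obtained by adding the relations $a^{\sigma(a)}=a$ for every $a\in\mathcal{A}$; $\mathbf{Ch}(\mathcal{A},2)$ is the case where $\sigma$ is constant equal to $2$. $\mathbf{Com}(\mathcal{A},\sigma)$ is the quotient of the free commutative monoid on $\mathcal{A}$ by the relations $a^{\sigma(a)}=a$, $a\in\mathcal{A}$. The maps $\theta:\mathbf{Ch}(\mathcal{A},\sigma)\to\mathbf{Ch}(\mathcal{A},2)$ and $\operatorname{ev}_\sigma:\mathbf{Ch}(\mathcal{A},\sigma)\to\mathbf{Com}(\mathcal{A},\sigma)$ are the natural surjective morphisms (induced by the identity on $\mathcal{A}$), and $\phi_\sigma(x)=(\theta(x),\operatorname{ev}_\sigma(x))$.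 *)

theory Defs
  imports Main
begin

text \<open>Monoids given by presentations are represented on the free monoid of words
  (lists): two words represent the same element of the quotient monoid iff they are
  related by the congruence generated by the defining relations.\<close>

definition rw_step :: "('a list \<Rightarrow> 'a list \<Rightarrow> bool) \<Rightarrow> 'a list \<Rightarrow> 'a list \<Rightarrow> bool" where
  "rw_step R u v \<longleftrightarrow> (\<exists>x y l r. R l r \<and> u = x @ l @ y \<and> v = x @ r @ y)"

definition pres_cong :: "('a list \<Rightarrow> 'a list \<Rightarrow> bool) \<Rightarrow> 'a list \<Rightarrow> 'a list \<Rightarrow> bool" where
  "pres_cong R = equivclp (rw_step R)"

definition chinese_rel :: "'a::linorder list \<Rightarrow> 'a list \<Rightarrow> bool" where
  "chinese_rel l r \<longleftrightarrow>
     (\<exists>a b c. a < b \<and> b < c \<and>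
        ((l = [c,b,a] \<and> r = [c,a,b]) \<or> (l = [c,a,b] \<and> r = [b,c,a]))) \<or>
     (\<exists>a b. a < b \<and> ((l = [a,b,a] \<and> r = [b,a,a]) \<or> (l = [b,b,a] \<and> r = [b,a,b])))"

definition chinese_sigma_rel :: "('a::linorder \<Rightarrow> nat) \<Rightarrow> 'a list \<Rightarrow> 'a list \<Rightarrow> bool" where
  "chinese_sigma_rel \<sigma> l r \<longleftrightarrow> chinese_rel l r \<or> (\<exists>a. l = replicate (\<sigma> a) a \<and> r = [a])"

definition ch_sigma_eq :: "('a::linorder \<Rightarrow> nat) \<Rightarrow> 'a list \<Rightarrow> 'a list \<Rightarrow> bool" where
  "ch_sigma_eq \<sigma> = pres_cong (chinese_sigma_rel \<sigma>)"

definition com_sigma_rel :: "('a \<Rightarrow> nat) \<Rightarrow> 'a list \<Rightarrow> 'a list \<Rightarrow> bool" where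
  "com_sigma_rel \<sigma> l r \<longleftrightarrow>
     (\<exists>a b. l = [a,b] \<and> r = [b,a]) \<or> (\<exists>a. l = replicate (\<sigma> a) a \<and> r = [a])"

text \<open>ev_sigma u = ev_sigma v in Com(A,sigma).\<close>
definition com_sigma_eq :: "('a \<Rightarrow> nat) \<Rightarrow> 'a list \<Rightarrow> 'a list \<Rightarrow> bool" where
  "com_sigma_eq \<sigma> = pres_cong (com_sigma_rel \<sigma>)"

end

theory Submission
  imports Defs "HOL-Library.Multiset"
begin


abbreviation Ch :: "'a::linorder list \<Rightarrow> 'a list \<Rightarrow> bool" where
  "Ch \<equiv> pres_cong chinese_rel"

lemma rw_step_ctx: "rw_step R u v \<Longrightarrow> rw_step R (p @ u @ q) (p @ v @ q)"
proof -
  assume "rw_step R u v"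
  then obtain x y l r where "R l r" "u = x@l@y" "v = x@r@y" unfolding rw_step_def by blast
  then show ?thesis unfolding rw_step_def
    by (rule_tac x="p@x" in exI, rule_tac x="y@q" in exI) auto
qed

lemma pres_cong_ctx: "pres_cong R u v \<Longrightarrow> pres_cong R (p @ u @ q) (p @ v @ q)"
  unfolding pres_cong_def
proof (induction rule: equivclp_induct)
  case base then show ?case by simp
next
  case (step y z) then show ?case by (meson equivclp_into_equivclp rw_step_ctx)
qed

lemma pres_cong_ctxI: "pres_cong R u v \<Longrightarrow> U = p @ u @ q \<Longrightarrow> V = p @ v @ q \<Longrightarrow> pres_cong R U V"
  using pres_cong_ctx by blast

lemma pres_cong_rel: "R l r \<Longrightarrow> pres_cong R l r"
  unfolding pres_cong_def rw_step_def by (intro r_into_equivclp) (metis append_Nil append_Nil2)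

lemma pres_cong_relI: "R l r \<Longrightarrow> U = p @ l @ q \<Longrightarrow> V = p @ r @ q \<Longrightarrow> pres_cong R U V"
  using pres_cong_ctx pres_cong_rel by blast

lemma pres_cong_sym: "pres_cong R u v \<Longrightarrow> pres_cong R v u"
  unfolding pres_cong_def by (rule equivclp_sym)

lemma pres_cong_trans [trans]: "pres_cong R u v \<Longrightarrow> pres_cong R v w \<Longrightarrow> pres_cong R u w"
  unfolding pres_cong_def by (rule equivclp_trans)

lemma pres_cong_refl[simp]: "pres_cong R u u"
  unfolding pres_cong_def by simp

lemma pres_cong_mono:
  assumes "\<And>l r. R l r \<Longrightarrow> R' l r" "pres_cong R u v"
  shows "pres_cong R' u v"
  using assms(2) unfolding pres_cong_def
proof (induction rule: equivclp_induct)
  case base then show ?case by simp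
next
  case (step y z)
  then have "rw_step R' y z \<or> rw_step R' z y" using assms(1) unfolding rw_step_def by blast
  then show ?case using step by (meson equivclp_into_equivclp)
qed

lemma pres_cong_inv:
  assumes "\<And>x y l r. R l r \<Longrightarrow> f (x@l@y) = f (x@r@y)" "pres_cong R u v"
  shows "f u = f v"
  using assms(2) unfolding pres_cong_def
proof (induction rule: equivclp_induct)
  case base then show ?case by simp
next
  case (step y z)
  then show ?case using assms(1) unfolding rw_step_def by metis
qed

lemma ch_r1: "a < b \<Longrightarrow> chinese_rel [a,b,a] [b,a,a]"
  unfolding chinese_rel_def by blast
lemma ch_r2: "a < b \<Longrightarrow> chinese_rel [b,b,a] [b,a,b]"
  unfolding chinese_rel_def by blast
lemma ch_r3: "a < b \<Longrightarrow> b < c \<Longrightarrow> chinese_rel [c,b,a] [c,a,b]"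
  unfolding chinese_rel_def by blast
lemma ch_r4: "a < b \<Longrightarrow> b < c \<Longrightarrow> chinese_rel [c,a,b] [b,c,a]"
  unfolding chinese_rel_def by blast

lemma ChI: "chinese_rel l r \<Longrightarrow> U = p @ l @ q \<Longrightarrow> V = p @ r @ q \<Longrightarrow> Ch U V"
  using pres_cong_relI by blast
lemma ChI': "chinese_rel l r \<Longrightarrow> U = p @ r @ q \<Longrightarrow> V = p @ l @ q \<Longrightarrow> Ch U V"
  using pres_cong_relI pres_cong_sym by blast

lemma R1: "x < a \<Longrightarrow> Ch (a # x # replicate q a) (replicate (Suc q) a @ [x])"
proof (induction q)
  case 0 then show ?case by simp
next
  case (Suc q)
  have "Ch (a # x # replicate (Suc q) a) (a # a # x # replicate q a)"
    by (rule ChI'[OF ch_r2[OF Suc.prems], where p="[]" and q="replicate q a"]) simp_all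
  also have "Ch \<dots> (a # replicate (Suc q) a @ [x])"
    by (rule pres_cong_ctxI[OF Suc.IH[OF Suc.prems], where p="[a]" and q="[]"]) simp_all
  finally show ?case by simp
qed

lemma R1': "x < a \<Longrightarrow> Ch (replicate (Suc p) a @ x # replicate q a) (replicate (Suc p + q) a @ [x])"
  by (rule pres_cong_ctxI[OF R1[of x a q], where p="replicate p a" and q="[]"])
     (simp_all add: replicate_app_Cons_same replicate_add)

lemma R2: "a < z \<Longrightarrow> Ch (z # replicate (Suc q) a) (replicate q a @ [z, a])"
proof (induction q)
  case 0 then show ?case by simp
next
  case (Suc q)
  have "Ch (z # replicate (Suc (Suc q)) a) (a # z # replicate (Suc q) a)"
    by (rule ChI'[OF ch_r1[OF Suc.prems], where p="[]" and q="replicate q a"]) simp_all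
  also have "Ch \<dots> (a # replicate q a @ [z, a])"
    by (rule pres_cong_ctxI[OF Suc.IH[OF Suc.prems], where p="[a]" and q="[]"]) simp_all
  finally show ?case by simp
qed

lemma R3: "x < a \<Longrightarrow> a < z \<Longrightarrow> Ch (replicate i a @ [z, x]) ([z, x] @ replicate i a)"
proof (induction i)
  case 0 then show ?case by simp
next
  case (Suc i)
  have "Ch (replicate (Suc i) a @ [z, x]) (replicate i a @ [z, x, a])"
    by (rule ChI'[OF ch_r4[OF Suc.prems], where p="replicate i a" and q="[]"])
       (simp_all add: replicate_append_same[symmetric])
  also have "Ch \<dots> ([z, x] @ replicate i a @ [a])"
    by (rule pres_cong_ctxI[OF Suc.IH[OF Suc.prems], where p="[]" and q="[a]"]) simp_all
  finally show ?case by (simp add: replicate_append_same)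
qed

lemma K: "a \<notin> set y \<Longrightarrow> y \<noteq> [] \<Longrightarrow> a < hd y \<Longrightarrow> (\<exists>w\<in>set y. w < a) \<Longrightarrow>
   \<exists>z x Q. a < z \<and> x < a \<and> Ch y (z#x#Q) \<and> length Q + 2 = length y"
proof (induction y)
  case Nil then show ?case by simp
next
  case (Cons z1 y1)
  then have z1: "a < z1" by simp
  from Cons.prems obtain w where w: "w \<in> set y1" "w < a" using z1 by auto
  then obtain t y2 where y1: "y1 = t # y2" by (cases y1) auto
  show ?case
  proof (cases "t < a")
    case True
    then show ?thesis using z1 y1 by (intro exI[of _ z1] exI[of _ t] exI[of _ y2]) simp
  next
    case False
    then have "a < t" using Cons.prems y1 by (cases "t = a") auto
    then obtain z2 x2 Q2 where IH: "a < z2" "x2 < a" "Ch y1 (z2#x2#Q2)" "length Q2 + 2 = length y1"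
      using Cons.IH Cons.prems w y1 by auto
    have c1: "Ch (z1#y1) (z1#z2#x2#Q2)"
      by (rule pres_cong_ctxI[OF IH(3), where p="[z1]" and q="[]"]) simp_all
    have x2z1: "x2 < z1" "x2 < z2" using IH z1 by auto
    consider "z2 < z1" | "z2 = z1" | "z1 < z2" by fastforce
    then show ?thesis
    proof cases
      case 1
      have "Ch (z1#z2#x2#Q2) (z1#x2#z2#Q2)"
        by (rule ChI[OF ch_r3[OF x2z1(2) 1], where p="[]" and q="Q2"]) simp_all
      then show ?thesis using c1 IH z1 by (intro exI[of _ z1] exI[of _ x2] exI[of _ "z2#Q2"])
          (auto intro: pres_cong_trans)
    next
      case 2
      have "Ch (z1#z2#x2#Q2) (z1#x2#z1#Q2)"
        by (rule ChI[OF ch_r2[OF x2z1(1)], where p="[]" and q="Q2"]) (simp_all add: 2)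
      then show ?thesis using c1 IH z1 by (intro exI[of _ z1] exI[of _ x2] exI[of _ "z1#Q2"])
          (auto intro: pres_cong_trans)
    next
      case 3
      have "Ch (z1#z2#x2#Q2) (z2#x2#z1#Q2)"
        by (rule ChI'[OF ch_r4[OF x2z1(1) 3], where p="[]" and q="Q2"]) simp_all
      then show ?thesis using c1 IH z1 by (intro exI[of _ z2] exI[of _ x2] exI[of _ "z1#Q2"])
          (auto intro: pres_cong_trans)
    qed
  qed
qed

locale chs =
  fixes \<sigma> :: "'a::linorder \<Rightarrow> nat"
  assumes sig: "\<And>a. 2 \<le> \<sigma> a"
begin

abbreviation E where "E \<equiv> ch_sigma_eq \<sigma>"

lemma Ch_E: "Ch u v \<Longrightarrow> E u v"
  unfolding ch_sigma_eq_def by (rule pres_cong_mono[of chinese_rel]) (auto simp: chinese_sigma_rel_def)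

lemma E_ctxI: "E u v \<Longrightarrow> U = p @ u @ q \<Longrightarrow> V = p @ v @ q \<Longrightarrow> E U V"
  unfolding ch_sigma_eq_def by (rule pres_cong_ctxI)
lemma E_sym: "E u v \<Longrightarrow> E v u"
  unfolding ch_sigma_eq_def by (rule pres_cong_sym)
lemma E_trans [trans]: "E u v \<Longrightarrow> E v w \<Longrightarrow> E u w"
  unfolding ch_sigma_eq_def by (rule pres_cong_trans)
lemma E_refl [simp]: "E u u"
  unfolding ch_sigma_eq_def by simp
lemma E_eq: "u = v \<Longrightarrow> E u v" by simp

lemma E_relI: "chinese_sigma_rel \<sigma> l r \<Longrightarrow> U = p @ l @ q \<Longrightarrow> V = p @ r @ q \<Longrightarrow> E U V"
  unfolding ch_sigma_eq_def using pres_cong_relI by blast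

lemma E_pow: "E (p @ replicate (\<sigma> a) a @ q) (p @ [a] @ q)"
proof (rule E_relI[where p=p and q=q])
  show "chinese_sigma_rel \<sigma> (replicate (\<sigma> a) a) [a]"
    unfolding chinese_sigma_rel_def by blast
qed simp_all

lemma ChE: "chinese_rel l r \<Longrightarrow> U = p @ l @ q \<Longrightarrow> V = p @ r @ q \<Longrightarrow> E U V"
  using Ch_E ChI by blast
lemma ChE': "chinese_rel l r \<Longrightarrow> U = p @ r @ q \<Longrightarrow> V = p @ l @ q \<Longrightarrow> E U V"
  using Ch_E ChI' by blast

lemma INF: "1 \<le> k \<Longrightarrow> E (p @ replicate k a @ q) (p @ replicate (k + (\<sigma> a - 1)) a @ q)"
proof -
  assume k: "1 \<le> k"
  have "E (p @ replicate (k - 1) a @ replicate (\<sigma> a) a @ q) (p @ replicate (k - 1) a @ [a] @ q)"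
    using E_pow[of "p @ replicate (k - 1) a"] by simp
  moreover have "replicate (k - 1) a @ [a] = replicate k a"
    using k by (cases k) (simp_all add: replicate_append_same)
  moreover have "replicate (k - 1) a @ replicate (\<sigma> a) a = replicate (k + (\<sigma> a - 1)) a"
  proof -
    have "k - 1 + \<sigma> a = k + (\<sigma> a - 1)" using k sig[of a] by simp
    then show ?thesis by (metis replicate_add)
  qed
  ultimately show ?thesis using E_sym by (metis append.assoc)
qed

lemma Tstar: "\<forall>i j i' j'. 1 \<le> i \<longrightarrow> 1 \<le> j \<longrightarrow> 1 \<le> i' \<longrightarrow> 1 \<le> j' \<longrightarrow> i + j = i' + j' \<longrightarrow>
   E (replicate i a @ y @ replicate j a) (replicate i' a @ y @ replicate j' a)"
proof (induction y rule: length_induct)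
  case (1 y)
  note IH = 1[rule_format]
  define n where "n = \<sigma> a - 1"
  have n1: "1 \<le> n" using sig[of a] by (simp add: n_def)
  show ?case
  proof (intro allI impI)
    fix i j i' j' :: nat
    assume ij: "1 \<le> i" "1 \<le> j" "1 \<le> i'" "1 \<le> j'" "i + j = i' + j'"
    show "E (replicate i a @ y @ replicate j a) (replicate i' a @ y @ replicate j' a)"
    proof (cases "y = []")
      case True
      then show ?thesis using ij by (simp add: replicate_add[symmetric])
    next
      case ne: False
      show ?thesis
      proof (cases "a \<in> set y")
        case True
        then obtain y1 y2 where y: "y = y1 @ a # y2" by (meson split_list)
        have l1: "length y1 < length y" and l2: "length y2 < length y" using y by auto
        have "E (replicate i a @ y @ replicate j a) (replicate 1 a @ y1 @ replicate i a @ y2 @ replicate j a)"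
          by (rule E_ctxI[OF IH[OF l1, of i 1 1 i], where p="[]" and q="y2 @ replicate j a"])
             (use ij y in simp_all)
        also have "E \<dots> (replicate 1 a @ y1 @ replicate i' a @ y2 @ replicate j' a)"
          by (rule E_ctxI[OF IH[OF l2, of i j i' j'], where p="replicate 1 a @ y1" and q="[]"])
             (use ij in simp_all)
        also have "E \<dots> (replicate i' a @ y @ replicate j' a)"
          by (rule E_ctxI[OF IH[OF l1, of 1 i' i' 1], where p="[]" and q="y2 @ replicate j' a"])
             (use ij y in simp_all)
        finally show ?thesis .
      next
        case noa: False
        from ne obtain x y' where y: "y = x # y'" by (cases y) auto
        show ?thesis
        proof (cases "x < a")
          case True
          have l: "length y' < length y" using y by simp
          have step: "E (replicate k a @ y @ replicate m a) (a # x # replicate (k + n - 1) a @ y' @ replicate m a)"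
            if "1 \<le> k" for k m
          proof -
            have "E (replicate k a @ y @ replicate m a) (replicate (k + n) a @ y @ replicate m a)"
              using INF[OF that, of "[]" a "y @ replicate m a"] by (simp add: n_def)
            also have "E \<dots> (a # x # replicate (k + n - 1) a @ y' @ replicate m a)"
              by (rule E_sym, rule E_ctxI[OF Ch_E[OF R1[OF True, of "k + n - 1"]], where p="[]" and q="y' @ replicate m a"])
                 (use that n1 y in simp_all)
            finally show ?thesis .
          qed
          have "E (a # x # replicate (i + n - 1) a @ y' @ replicate j a) (a # x # replicate (i' + n - 1) a @ y' @ replicate j' a)"
            by (rule E_ctxI[OF IH[OF l, of "i + n - 1" j "i' + n - 1" j'], where p="[a,x]" and q="[]"])
               (use ij n1 in simp_all)
          then show ?thesis using step[OF ij(1), of j] step[OF ij(3), of j'] by (meson E_sym E_trans)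
        next
          case False
          then have ax: "a < x" using noa y by (cases "x = a") auto
          show ?thesis
          proof (cases "\<exists>w\<in>set y. w < a")
            case True
            then obtain z x' Q where K: "a < z" "x' < a" "Ch y (z#x'#Q)" "length Q + 2 = length y"
              using K[OF noa ne] ax y by auto
            have l: "length Q < length y" using K by simp
            have bk: "E (replicate k a @ y @ replicate m a) ([z,x'] @ replicate k a @ Q @ replicate m a)" for k m
            proof -
              have "E (replicate k a @ y @ replicate m a) (replicate k a @ [z,x'] @ Q @ replicate m a)"
                by (rule E_ctxI[OF Ch_E[OF K(3)], where p="replicate k a" and q="replicate m a"]) simp_all
              also have "E \<dots> ([z,x'] @ replicate k a @ Q @ replicate m a)"
                by (rule E_ctxI[OF Ch_E[OF R3[OF K(2) K(1), of k]], where p="[]" and q="Q @ replicate m a"]) simp_all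
              finally show ?thesis .
            qed
            have "E ([z,x'] @ replicate i a @ Q @ replicate j a) ([z,x'] @ replicate i' a @ Q @ replicate j' a)"
              by (rule E_ctxI[OF IH[OF l, of i j i' j'], where p="[z,x']" and q="[]"]) (use ij in simp_all)
            then show ?thesis using bk[of i j] bk[of i' j'] by (meson E_sym E_trans)
          next
            case False
            then have allhi: "\<forall>w\<in>set y. a < w" using noa by (metis linorder_neqE)
            define y'' where "y'' = butlast y"
            define z where "z = last y"
            have yz: "y = y'' @ [z]" using ne by (simp add: y''_def z_def)
            have az: "a < z" using allhi ne by (simp add: z_def)
            have l: "length y'' < length y" using yz by simp
            have step: "E (replicate k a @ y @ replicate m a) (replicate k a @ y'' @ replicate (m + n - 1) a @ [z, a])"
              if "1 \<le> m" for k m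
            proof -
              have "E (replicate k a @ y @ replicate m a) (replicate k a @ y @ replicate (m + n) a)"
                using INF[OF that, of "replicate k a @ y" a "[]"] by (simp add: n_def)
              also have "E \<dots> (replicate k a @ y'' @ replicate (m + n - 1) a @ [z, a])"
                by (rule E_ctxI[OF Ch_E[OF R2[OF az, of "m + n - 1"]], where p="replicate k a @ y''" and q="[]"])
                   (use that n1 yz in simp_all)
              finally show ?thesis .
            qed
            have "E (replicate i a @ y'' @ replicate (j + n - 1) a @ [z, a]) (replicate i' a @ y'' @ replicate (j' + n - 1) a @ [z, a])"
              by (rule E_ctxI[OF IH[OF l, of i "j + n - 1" i' "j' + n - 1"], where p="[]" and q="[z,a]"])
                 (use ij n1 in simp_all)
            then show ?thesis using step[OF ij(2), of i] step[OF ij(4), of i'] by (meson E_sym E_trans)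
          qed
        qed
      qed
    qed
  qed
qed

end



fun ins :: "'a set \<Rightarrow> ('a \<Rightarrow> nat) \<Rightarrow> 'a list \<Rightarrow> 'a list" where
  "ins S c [] = []"
| "ins S c (x#w) = (if x \<in> S then [x] else replicate (Suc (c x)) x) @ ins (insert x S) c w"

lemma ins_append: "ins S c (p @ q) = ins S c p @ ins (S \<union> set p) c q"
  by (induction p arbitrary: S) auto

lemma ins_id: "(\<And>x. x \<in> set w \<Longrightarrow> x \<notin> S \<Longrightarrow> c x = 0) \<Longrightarrow> ins S c w = w"
proof (induction w arbitrary: S)
  case (Cons x w)
  then have "ins (insert x S) c w = w" by (intro Cons.IH) auto
  then show ?case using Cons.prems by auto
qed simp

lemma ins_rep: "x \<notin> S \<Longrightarrow> ins S c (replicate (Suc k) x) = replicate (Suc (c x + k)) x"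
proof -
  assume x: "x \<notin> S"
  have "ins (insert x S) c (replicate k x) = replicate k x" by (rule ins_id) auto
  then show ?thesis using x by (simp add: replicate_add)
qed

lemma ins_comp: "ins S c (ins S c' w) = ins S (\<lambda>b. c b + c' b) w"
proof (induction w arbitrary: S)
  case Nil then show ?case by simp
next
  case (Cons x w)
  show ?case
  proof (cases "x \<in> S")
    case True
    then show ?thesis using Cons.IH[of "insert x S"] by (simp add: ins_append)
  next
    case False
    then show ?thesis using Cons.IH[of "insert x S"]
      by (simp add: ins_append ins_rep del: replicate_Suc)
  qed
qed

fun dbl1 :: "'a \<Rightarrow> 'a list \<Rightarrow> 'a list" where
  "dbl1 d [] = []"
| "dbl1 d (x#w) = (if x = d then d # d # w else x # dbl1 d w)"

definition dl :: "'a \<Rightarrow> 'a \<Rightarrow> nat" where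
  "dl d = (\<lambda>b. if b = d then Suc 0 else 0)"

lemma ins_dl: "d \<notin> S \<Longrightarrow> ins S (dl d) w = dbl1 d w"
proof (induction w arbitrary: S)
  case Nil then show ?case by simp
next
  case (Cons x w)
  show ?case
  proof (cases "x = d")
    case True
    have "ins (insert d S) (dl d) w = w" by (rule ins_id) (auto simp: dl_def)
    then show ?thesis using Cons.prems True by (simp add: dl_def)
  next
    case False
    then show ?thesis using Cons.prems Cons.IH[of "insert x S"] by (simp add: dl_def)
  qed
qed

lemma dbl1_app: "a \<notin> set x \<Longrightarrow> dbl1 a (x @ a # y) = x @ a # a # y"
  by (induction x) auto

lemma dbl1_nin: "d \<notin> set w \<Longrightarrow> dbl1 d w = w"
  by (induction w) auto

context chs
begin

lemma PB: "a < b \<Longrightarrow> E [b,a,a,b] [b,b,a,a]"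
proof -
  assume ab: "a < b"
  obtain m where sb: "\<sigma> b = Suc (Suc m)" using sig[of b] by (metis add_2_eq_Suc le_Suc_ex)
  have "E [b,a,a,b] (replicate (\<sigma> b) b @ [a,a,b])"
    using INF[of 1 "[]" b "[a,a,b]"] by (simp add: sb)
  also have "E \<dots> (b # a # replicate (Suc m) b @ [a,b])"
    by (rule E_sym, rule E_ctxI[OF Ch_E[OF R1[OF ab, of "Suc m"]], where p="[]" and q="[a,b]"])
       (simp_all add: sb)
  also have "E \<dots> (b # a # replicate (Suc (Suc m)) b @ [a])"
    by (rule E_ctxI[OF Ch_E[OF R1'[OF ab, of m 1]], where p="[b,a]" and q="[]"])
       (simp_all add: replicate_append_same)
  also have "E \<dots> (replicate (Suc (Suc (Suc m))) b @ [a,a])"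
    by (rule E_ctxI[OF Ch_E[OF R1[OF ab, of "Suc (Suc m)"]], where p="[]" and q="[a]"]) simp_all
  also have "E \<dots> [b,b,a,a]"
    using INF[of 2 "[]" b "[a,a]"] sb by (simp add: numeral_2_eq_2 E_sym)
  finally show ?thesis .
qed

lemma PC: "a < b \<Longrightarrow> b < c \<Longrightarrow> E [c,a,b,a] [c,a,a,b]"
proof -
  assume ab: "a < b" and bc: "b < c"
  then have ac: "a < c" by simp
  obtain m where sc: "\<sigma> c = Suc (Suc m)" using sig[of c] by (metis add_2_eq_Suc le_Suc_ex)
  have "E [c,a,b,a] (replicate m c @ [c,c,a,b,a])"
    using INF[of 1 "[]" c "[a,b,a]"] by (simp add: sc replicate_app_Cons_same)
  also have "E \<dots> (replicate m c @ [c,a,c,b,a])"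
    by (rule ChE[OF ch_r2[OF ac], where p="replicate m c" and q="[b,a]"]) simp_all
  also have "E \<dots> (replicate m c @ [c,a,c,a,b])"
    by (rule ChE[OF ch_r3[OF ab bc], where p="replicate m c @ [c,a]" and q="[]"]) simp_all
  also have "E \<dots> (replicate m c @ [c,c,a,a,b])"
    by (rule ChE'[OF ch_r2[OF ac], where p="replicate m c" and q="[a,b]"]) simp_all
  also have "E \<dots> [c,a,a,b]"
    using INF[of 1 "[]" c "[a,a,b]"] by (simp add: sc replicate_app_Cons_same E_sym)
  finally show ?thesis .
qed

lemma P8: "a < b \<Longrightarrow> b < c \<Longrightarrow> E [c,c,a,b] [b,c,c,a]"
proof -
  assume ab: "a < b" and bc: "b < c"
  then have ac: "a < c" by simp
  obtain m where sa: "\<sigma> a = Suc (Suc m)" using sig[of a] by (metis add_2_eq_Suc le_Suc_ex)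
  have "E [c,c,a,b] [c,b,c,a]"
    by (rule ChE[OF ch_r4[OF ab bc], where p="[c]" and q="[]"]) simp_all
  also have "E \<dots> ([c,b,c,a,a] @ replicate m a)"
    using INF[of 1 "[c,b,c]" a "[]"] by (simp add: sa)
  also have "E \<dots> ([c,b,a,c,a] @ replicate m a)"
    by (rule ChE'[OF ch_r1[OF ac], where p="[c,b]" and q="replicate m a"]) simp_all
  also have "E \<dots> ([c,a,b,c,a] @ replicate m a)"
    by (rule ChE[OF ch_r3[OF ab bc], where p="[]" and q="[c,a] @ replicate m a"]) simp_all
  also have "E \<dots> ([b,c,a,c,a] @ replicate m a)"
    by (rule ChE[OF ch_r4[OF ab bc], where p="[]" and q="[c,a] @ replicate m a"]) simp_all
  also have "E \<dots> ([b,c,c,a,a] @ replicate m a)"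
    by (rule ChE[OF ch_r1[OF ac], where p="[b,c]" and q="replicate m a"]) simp_all
  also have "E \<dots> [b,c,c,a]"
    using INF[of 1 "[b,c,c]" a "[]"] by (simp add: sa E_sym)
  finally show ?thesis .
qed

lemma pat3: "a < b \<Longrightarrow> b < c \<Longrightarrow> d \<in> set [c,b,a] \<Longrightarrow> E (dbl1 d [c,b,a]) (dbl1 d [c,a,b])"
proof -
  assume ab: "a < b" and bc: "b < c" and d: "d \<in> set [c,b,a]"
  then have ac: "a < c" by simp
  have ne[simp]: "a \<noteq> b" "b \<noteq> a" "b \<noteq> c" "c \<noteq> b" "a \<noteq> c" "c \<noteq> a" using ab bc by auto
  from d consider "d = c" | "d = b" | "d = a" by auto
  then show ?thesis
  proof cases
    case 1
    then show ?thesis using ab bc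
      by (simp, intro ChE[OF ch_r3[OF ab bc], where p="[c]" and q="[]"]) simp_all
  next
    case 2
    have "E [c,b,b,a] [c,b,a,b]" by (rule ChE[OF ch_r2[OF ab], where p="[c]" and q="[]"]) simp_all
    also have "E \<dots> [c,a,b,b]" by (rule ChE[OF ch_r3[OF ab bc], where p="[]" and q="[b]"]) simp_all
    finally show ?thesis using 2 ab bc by simp
  next
    case 3
    have "E [c,b,a,a] [c,a,b,a]" by (rule ChE[OF ch_r3[OF ab bc], where p="[]" and q="[a]"]) simp_all
    also have "E \<dots> [c,a,a,b]" by (rule PC[OF ab bc])
    finally show ?thesis using 3 ab bc by simp
  qed
qed

lemma pat4: "a < b \<Longrightarrow> b < c \<Longrightarrow> d \<in> set [c,a,b] \<Longrightarrow> E (dbl1 d [c,a,b]) (dbl1 d [b,c,a])"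
proof -
  assume ab: "a < b" and bc: "b < c" and d: "d \<in> set [c,a,b]"
  then have ac: "a < c" by simp
  have ne[simp]: "a \<noteq> b" "b \<noteq> a" "b \<noteq> c" "c \<noteq> b" "a \<noteq> c" "c \<noteq> a" using ab bc by auto
  from d consider "d = c" | "d = b" | "d = a" by auto
  then show ?thesis
  proof cases
    case 1
    then show ?thesis using ab bc P8[OF ab bc] by simp
  next
    case 2
    have "E [c,a,b,b] [b,c,a,b]" by (rule ChE[OF ch_r4[OF ab bc], where p="[]" and q="[b]"]) simp_all
    also have "E \<dots> [b,b,c,a]" by (rule ChE[OF ch_r4[OF ab bc], where p="[b]" and q="[]"]) simp_all
    finally show ?thesis using 2 ab bc by simp
  next
    case 3
    have "E [c,a,a,b] [c,a,b,a]" by (rule E_sym, rule PC[OF ab bc])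
    also have "E \<dots> [b,c,a,a]" by (rule ChE[OF ch_r4[OF ab bc], where p="[]" and q="[a]"]) simp_all
    finally show ?thesis using 3 ab bc by simp
  qed
qed

lemma pat1: "a < b \<Longrightarrow> d \<in> set [a,b,a] \<Longrightarrow> E (dbl1 d [a,b,a]) (dbl1 d [b,a,a])"
proof -
  assume ab: "a < b" and d: "d \<in> set [a,b,a]"
  have ne[simp]: "a \<noteq> b" "b \<noteq> a" using ab by auto
  from d consider "d = b" | "d = a" by auto
  then show ?thesis
  proof cases
    case 1
    have "E [a,b,b,a] [a,b,a,b]" by (rule ChE[OF ch_r2[OF ab], where p="[a]" and q="[]"]) simp_all
    also have "E \<dots> [b,a,a,b]" by (rule ChE[OF ch_r1[OF ab], where p="[]" and q="[b]"]) simp_all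
    also have "E \<dots> [b,b,a,a]" by (rule PB[OF ab])
    finally show ?thesis using 1 ab by simp
  next
    case 2
    have "E [a,a,b,a] [a,b,a,a]" by (rule ChE[OF ch_r1[OF ab], where p="[a]" and q="[]"]) simp_all
    also have "E \<dots> [b,a,a,a]" by (rule ChE[OF ch_r1[OF ab], where p="[]" and q="[a]"]) simp_all
    finally show ?thesis using 2 ab by simp
  qed
qed

lemma pat2: "a < b \<Longrightarrow> d \<in> set [b,b,a] \<Longrightarrow> E (dbl1 d [b,b,a]) (dbl1 d [b,a,b])"
proof -
  assume ab: "a < b" and d: "d \<in> set [b,b,a]"
  have ne[simp]: "a \<noteq> b" "b \<noteq> a" using ab by auto
  from d consider "d = b" | "d = a" by auto
  then show ?thesis
  proof cases
    case 1
    then show ?thesis using ab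
      by (simp, intro ChE[OF ch_r2[OF ab], where p="[b]" and q="[]"]) simp_all
  next
    case 2
    then show ?thesis using ab E_sym[OF PB[OF ab]] by simp
  qed
qed

lemma patS: "d \<in> set (replicate (\<sigma> a) a) \<Longrightarrow> E (dbl1 d (replicate (\<sigma> a) a)) (dbl1 d [a])"
proof -
  assume d: "d \<in> set (replicate (\<sigma> a) a)"
  then have da: "d = a" by simp
  obtain m where sa: "\<sigma> a = Suc m" using sig[of a] by (metis Suc_le_D numeral_2_eq_2)
  have "E ([a] @ replicate (\<sigma> a) a @ []) ([a] @ [a] @ [])" by (rule E_pow)
  then show ?thesis using da sa by simp
qed

lemma pat: "chinese_sigma_rel \<sigma> l r \<Longrightarrow> d \<in> set l \<Longrightarrow> E (dbl1 d l) (dbl1 d r)"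
proof -
  assume R: "chinese_sigma_rel \<sigma> l r" and d: "d \<in> set l"
  from R consider (A) a b c where "a < b" "b < c" "l = [c,b,a]" "r = [c,a,b]"
    | (B) a b c where "a < b" "b < c" "l = [c,a,b]" "r = [b,c,a]"
    | (C) a b where "a < b" "l = [a,b,a]" "r = [b,a,a]"
    | (D) a b where "a < b" "l = [b,b,a]" "r = [b,a,b]"
    | (S) a where "l = replicate (\<sigma> a) a" "r = [a]"
    unfolding chinese_sigma_rel_def chinese_rel_def by metis
  then show ?thesis
  proof cases
    case A then show ?thesis using pat3 d by simp
  next
    case B then show ?thesis using pat4 d by simp
  next
    case C then show ?thesis using pat1 d by simp
  next
    case D then show ?thesis using pat2 d by simp
  next
    case S then show ?thesis using patS d by simp
  qed
qed

lemma set_rel: "chinese_sigma_rel \<sigma> l r \<Longrightarrow> set l = set r"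
proof -
  assume R: "chinese_sigma_rel \<sigma> l r"
  have "\<sigma> a \<noteq> 0" for a using sig[of a] by simp
  then show ?thesis using R unfolding chinese_sigma_rel_def chinese_rel_def by auto
qed

lemma E1_step: "chinese_sigma_rel \<sigma> l r \<Longrightarrow> E (ins S (dl d) l) (ins S (dl d) r)"
proof -
  assume R: "chinese_sigma_rel \<sigma> l r"
  show ?thesis
  proof (cases "d \<in> S \<or> d \<notin> set l")
    case True
    then have "ins S (dl d) l = l" "ins S (dl d) r = r"
      using set_rel[OF R] by (auto intro!: ins_id simp: dl_def)
    then show ?thesis using E_relI[OF R, of l "[]" "[]" r] by simp
  next
    case False
    then show ?thesis using pat[OF R] by (simp add: ins_dl)
  qed
qed

lemma E1_rw: "rw_step (chinese_sigma_rel \<sigma>) u v \<Longrightarrow> E (ins {} (dl d) u) (ins {} (dl d) v)"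
proof -
  assume "rw_step (chinese_sigma_rel \<sigma>) u v"
  then obtain x y l r where R: "chinese_sigma_rel \<sigma> l r" and uv: "u = x@l@y" "v = x@r@y"
    unfolding rw_step_def by blast
  show ?thesis
    by (rule E_ctxI[OF E1_step[OF R, of "set x" d], where p="ins {} (dl d) x" and q="ins (set x \<union> set l) (dl d) y"])
       (simp_all add: uv ins_append set_rel[OF R])
qed

lemma E1: "E u v \<Longrightarrow> E (ins {} (dl d) u) (ins {} (dl d) v)"
proof -
  assume "E u v"
  then have "equivclp (rw_step (chinese_sigma_rel \<sigma>)) u v" unfolding ch_sigma_eq_def pres_cong_def .
  then show ?thesis
  proof (induction rule: equivclp_induct)
    case base then show ?case by simp
  next
    case (step y z)
    then show ?case using E1_rw E_sym E_trans by blast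
  qed
qed

lemma E1M: "E u v \<Longrightarrow> E (ins {} (count M) u) (ins {} (count M) v)"
proof (induction M)
  case empty
  then show ?case by (simp add: ins_id)
next
  case (add x M)
  have c: "count (add_mset x M) = (\<lambda>b. dl x b + count M b)" by (auto simp: dl_def)
  show ?case unfolding c ins_comp[symmetric] using E1[OF add.IH[OF add.prems]] .
qed

lemma E1c: "finite (UNIV::'a set) \<Longrightarrow> E u v \<Longrightarrow> E (ins {} c u) (ins {} c v)"
proof -
  assume f: "finite (UNIV::'a set)" and uv: "E u v"
  have "count (Abs_multiset c) = c" by (rule count_Abs_multiset, rule finite_subset[OF subset_UNIV f])
  then show ?thesis using E1M[OF uv, of "Abs_multiset c"] by simp
qed

lemma E2: "E (ins {} (dl a) (x @ a # y)) (x @ a # a # y)"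
proof (cases "a \<in> set x")
  case True
  then obtain x1 x2 where x: "x = x1 @ a # x2" "a \<notin> set x1" by (meson split_list_first)
  have T: "E (replicate 2 a @ x2 @ replicate 1 a) (replicate 1 a @ x2 @ replicate 2 a)"
    using Tstar[of a x2, rule_format, of 2 1 1 2] by simp
  show ?thesis
    by (rule E_ctxI[OF T, where p=x1 and q=y]) (simp_all add: x ins_dl dbl1_app numeral_2_eq_2)
next
  case False
  then show ?thesis by (simp add: ins_dl dbl1_app)
qed

lemma INFm: "E (p @ replicate (Suc (k * (\<sigma> a - 1))) a @ q) (p @ [a] @ q)"
proof (induction k)
  case 0 then show ?case by simp
next
  case (Suc k)
  have "E (p @ replicate (Suc (k * (\<sigma> a - 1))) a @ q) (p @ replicate (Suc (k * (\<sigma> a - 1)) + (\<sigma> a - 1)) a @ q)"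
    by (rule INF) simp
  moreover have "Suc (k * (\<sigma> a - 1)) + (\<sigma> a - 1) = Suc (Suc k * (\<sigma> a - 1))" by simp
  ultimately show ?case using Suc.IH E_sym E_trans by metis
qed

lemma E3: "(\<And>b. b \<in> set w \<Longrightarrow> b \<notin> S \<Longrightarrow> (\<sigma> b - 1) dvd c b) \<Longrightarrow> E (ins S c w) w"
proof (induction w arbitrary: S)
  case Nil then show ?case by simp
next
  case (Cons x w)
  have IH: "E (ins (insert x S) c w) w" using Cons by (intro Cons.IH) auto
  have IH': "E ([x] @ ins (insert x S) c w @ []) ([x] @ w @ [])"
    by (rule E_ctxI[OF IH, where p="[x]" and q="[]"]) simp_all
  show ?case
  proof (cases "x \<in> S")
    case True
    then show ?thesis using IH' by simp
  next
    case False
    have "(\<sigma> x - 1) dvd c x" using Cons.prems[of x] False by simp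
    then obtain k where "c x = (\<sigma> x - 1) * k" by (rule dvdE)
    then have k: "c x = k * (\<sigma> x - 1)" by (simp add: mult.commute)
    have "E ([] @ replicate (Suc (k * (\<sigma> x - 1))) x @ ins (insert x S) c w) ([] @ [x] @ ins (insert x S) c w)"
      by (rule INFm)
    then have "E (ins S c (x # w)) ([x] @ ins (insert x S) c w)" using False k by simp
    then show ?thesis using IH' E_trans by simp
  qed
qed

lemma ch_mset: "chinese_rel l r \<Longrightarrow> mset l = mset r"
  unfolding chinese_rel_def by (auto simp: add_mset_commute)

lemma Qstep: "rw_step (chinese_sigma_rel (\<lambda>_. 2)) u v \<Longrightarrow>
  \<exists>c c'. E (ins {} c u) (ins {} c' v) \<and> (\<forall>b. count (mset u) b + c b = count (mset v) b + c' b)"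
proof -
  assume "rw_step (chinese_sigma_rel (\<lambda>_. 2)) u v"
  then obtain x y l r where R: "chinese_sigma_rel (\<lambda>_. 2) l r" and uv: "u = x@l@y" "v = x@r@y"
    unfolding rw_step_def by blast
  have z: "ins {} (\<lambda>_. 0) w = w" for w by (rule ins_id) simp
  from R consider "chinese_rel l r" | a where "l = [a,a]" "r = [a]"
    unfolding chinese_sigma_rel_def by (auto simp: numeral_2_eq_2)
  then show ?thesis
  proof cases
    case 1
    have "E u v" using ChE[OF 1 uv] .
    moreover have "mset u = mset v" using ch_mset[OF 1] uv by simp
    ultimately have "E (ins {} (\<lambda>_. 0) u) (ins {} (\<lambda>_. 0) v) \<and> (\<forall>b. count (mset u) b + 0 = count (mset v) b + 0)"
      using z[of u] z[of v] by simp
    then show ?thesis by blast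
  next
    case (2 a)
    have "E (ins {} (dl a) v) u" using E2[of a x y] 2 uv by simp
    then have "E u (ins {} (dl a) v)" by (rule E_sym)
    then have "E (ins {} (\<lambda>_. 0) u) (ins {} (dl a) v)" using z[of u] by simp
    moreover have "\<forall>b. count (mset u) b + 0 = count (mset v) b + dl a b"
      using 2 uv by (auto simp: dl_def)
    ultimately show ?thesis by blast
  qed
qed

lemma Qall:
  assumes f: "finite (UNIV::'a set)" and uv: "ch_sigma_eq (\<lambda>_. 2) u v"
  shows "\<exists>c c'. E (ins {} c u) (ins {} c' v) \<and> (\<forall>b. count (mset u) b + c b = count (mset v) b + c' b)"
proof -
  have "equivclp (rw_step (chinese_sigma_rel (\<lambda>_. 2))) u v"
    using uv unfolding ch_sigma_eq_def pres_cong_def .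
  then show ?thesis
  proof (induction rule: equivclp_induct)
    case base
    have "ins {} (\<lambda>_. 0) u = u" by (rule ins_id) simp
    then show ?case by (intro exI[of _ "\<lambda>_. 0"]) simp
  next
    case (step y z)
    from step.IH obtain c1 c1' where A: "E (ins {} c1 u) (ins {} c1' y)"
      and cA: "\<forall>b. count (mset u) b + c1 b = count (mset y) b + c1' b" by blast
    have "\<exists>c2 c2'. E (ins {} c2 y) (ins {} c2' z) \<and> (\<forall>b. count (mset y) b + c2 b = count (mset z) b + c2' b)"
    proof (cases "rw_step (chinese_sigma_rel (\<lambda>_. 2)) y z")
      case True then show ?thesis by (rule Qstep)
    next
      case False
      then have "rw_step (chinese_sigma_rel (\<lambda>_. 2)) z y" using step.hyps by blast
      from Qstep[OF this] obtain c c' where "E (ins {} c z) (ins {} c' y)"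
        "\<forall>b. count (mset z) b + c b = count (mset y) b + c' b" by blast
      then show ?thesis using E_sym by (intro exI[of _ c'] exI[of _ c]) auto
    qed
    then obtain c2 c2' where B: "E (ins {} c2 y) (ins {} c2' z)"
      and cB: "\<forall>b. count (mset y) b + c2 b = count (mset z) b + c2' b" by blast
    have "E (ins {} c2 (ins {} c1 u)) (ins {} c2 (ins {} c1' y))" by (rule E1c[OF f A])
    moreover have "E (ins {} c1' (ins {} c2 y)) (ins {} c1' (ins {} c2' z))" by (rule E1c[OF f B])
    moreover have "ins {} c2 (ins {} c1' y) = ins {} c1' (ins {} c2 y)"
      by (simp add: ins_comp add.commute)
    ultimately have "E (ins {} (\<lambda>b. c2 b + c1 b) u) (ins {} (\<lambda>b. c1' b + c2' b) z)"
      using E_trans by (simp add: ins_comp)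
    moreover have "\<forall>b. count (mset u) b + (c2 b + c1 b) = count (mset z) b + (c1' b + c2' b)"
    proof
      fix b show "count (mset u) b + (c2 b + c1 b) = count (mset z) b + (c1' b + c2' b)"
        using cA[rule_format, of b] cB[rule_format, of b] by simp
    qed
    ultimately show ?case by blast
  qed
qed

lemma com_mod: "com_sigma_eq \<sigma> u v \<Longrightarrow> count (mset u) b mod (\<sigma> b - 1) = count (mset v) b mod (\<sigma> b - 1)"
  unfolding com_sigma_eq_def
proof (rule pres_cong_inv[where f="\<lambda>w. count (mset w) b mod (\<sigma> b - 1)"])
  fix x y l r
  assume "com_sigma_rel \<sigma> l r"
  then consider a c where "l = [a,c]" "r = [c,a]" | a where "l = replicate (\<sigma> a) a" "r = [a]"
    unfolding com_sigma_rel_def by blast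
  then show "count (mset (x @ l @ y)) b mod (\<sigma> b - 1) = count (mset (x @ r @ y)) b mod (\<sigma> b - 1)"
  proof cases
    case 1 then show ?thesis by (simp add: add_mset_commute)
  next
    case (2 a)
    show ?thesis
    proof (cases "a = b")
      case True
      have h: "count (mset (x @ l @ y)) b = count (mset (x @ r @ y)) b + (\<sigma> b - 1)"
        using 2 True sig[of b] by simp
      show ?thesis unfolding h by (rule mod_add_self2)
    next
      case False then show ?thesis using 2 by simp
    qed
  qed
qed

lemma arith1: "(x::nat) + c = y + c' \<Longrightarrow> x mod n = y mod n \<Longrightarrow> c mod n = c' mod n"
proof -
  assume e: "x + c = y + c'" and m: "x mod n = y mod n"
  obtain q1 q2 where q: "x + n*q1 = y + n*q2" using m nat_mod_eq_iff by blast
  have "c + n*q2 = c' + n*q1" using e q by linarith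
  then show ?thesis unfolding nat_mod_eq_iff by blast
qed

lemma final:
  assumes f: "finite (UNIV::'a set)" and uv2: "ch_sigma_eq (\<lambda>_. 2) u v" and com: "com_sigma_eq \<sigma> u v"
  shows "E u v"
proof -
  obtain c c' where A: "E (ins {} c u) (ins {} c' v)"
    and cnt: "\<forall>b. count (mset u) b + c b = count (mset v) b + c' b" using Qall[OF f uv2] by blast
  define n where "n b = \<sigma> b - 1" for b
  have n1: "1 \<le> n b" for b using sig[of b] by (simp add: n_def)
  define d where "d b = c b * (n b - 1)" for b
  have cm: "c b mod n b = c' b mod n b" for b
    using arith1[of "count (mset u) b" "c b" "count (mset v) b" "c' b" "n b"] cnt com_mod[OF com, of b]
    by (simp add: n_def)
  have "E (ins {} d (ins {} c u)) (ins {} d (ins {} c' v))" by (rule E1c[OF f A])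
  then have B: "E (ins {} (\<lambda>b. d b + c b) u) (ins {} (\<lambda>b. d b + c' b) v)" by (simp add: ins_comp)
  have d1: "n b dvd d b + c b" for b
  proof -
    have "d b + c b = c b * n b" using n1[of b] by (simp add: d_def algebra_simps)
    then show ?thesis by simp
  qed
  have d2: "n b dvd d b + c' b" for b
  proof -
    have "(d b + c' b) mod n b = (d b + c b) mod n b" using cm[of b] by (metis mod_add_right_eq)
    then show ?thesis using d1[of b] by (simp add: dvd_eq_mod_eq_0)
  qed
  have "E (ins {} (\<lambda>b. d b + c b) u) u" by (rule E3) (use d1 in \<open>simp add: n_def\<close>)
  moreover have "E (ins {} (\<lambda>b. d b + c' b) v) v" by (rule E3) (use d2 in \<open>simp add: n_def\<close>)
  ultimately show ?thesis using B E_sym E_trans by blast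
qed

end

theorem mainTheorem2:
  fixes \<sigma> :: "'a::{finite,linorder} \<Rightarrow> nat"
  assumes "\<forall>a. \<sigma> a \<ge> 2"
  shows "\<forall>u v :: 'a list.
           ch_sigma_eq (\<lambda>_. 2) u v \<and> com_sigma_eq \<sigma> u v \<longrightarrow> ch_sigma_eq \<sigma> u v"
proof -
  interpret chs \<sigma> using assms by unfold_locales auto
  show ?thesis using final[OF finite_UNIV] by blast
qed

end
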